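(* Let $R$ be a unital ring and let $(P,Q,\psi)$ be a unital $R$-system satisfying Condition (FS'). Let $(S,T,\sigma,B)$ be an injective, surjective and graded covariant representation of $(P,Q,\psi)$ such that (a) $(S,T,\sigma,B)$ is faithful, and (b) $\psi$ is surjective. Then $B$ is strongly $\mathbb{Z}$-graded.
   Context: A $\mathbb{Z}$-graded ring $B=\bigoplus_{i\in\mathbb{Z}}B_i$ is strongly graded if $B_mB_n=B_{m+n}$ for all $m,n$ (where $XY$ is the additive subgroup generated by products). An $R$-system is a triple $(P,Q,\psi)$ with $P,Q$ $R$-bimodules and $\psi:P\otimes_RQ\to R$ an $R$-bimodule homomorphism; it is unital if $R$ is unital and $1_R$ acts as identity on both sides of $P$ and $Q$. A covariant representation of $(P,Q,\psi)$ is a tuple $(S,T,\sigma,B)$ with $B$ a ring, $S:P\to B$, $T:Q\to B$ additive maps, $\sigma:R\to B$ a ring homomorphism, such that $S(pr)=S(p)\sigma(r)$, $S(rp)=\sigma(r)S(p)$, $T(qr)=T(q)\sigma(r)$, $T(rq)=\sigma(r)T(q)$ and $\sigma(\psi(p\otimes q))=S(p)T(q)$. It is injective if $\sigma$ is injective, surjective if $B$ is generated as a ring by $\sigma(R)\cup S(P)\cup T(Q)$, and graded if it is surjective and $B$ carries a $\mathbb{Z}$-grading with $\sigma(R)\subseteq B_0$, $T(Q)\subseteq B_1$, $S(P)\subseteq B_{-1}$. For $q\in Q,p\in P$ let $\theta_{q,p}:Q\to Q$, $x\mapsto q\psi(p\otimes x)$, and $\theta_{p,q}:P\to P$, $y\mapsto\psi(y\otimes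 q)p$; $\mathcal{F}_P(Q)$ (resp. $\mathcal{F}_Q(P)$) is the additive group generated by all $\theta_{q,p}$ (resp. $\theta_{p,q}$). Condition (FS'): there exist $\Theta\in\mathcal{F}_P(Q)$, $\Phi\in\mathcal{F}_Q(P)$ with $\Theta(q)=q$, $\Phi(p)=p$ for all $q\in Q,p\in P$. Let $\Delta:R\to\mathrm{End}(Q_R)$, $\Delta(r)(q)=rq$. Under (FS') (which implies the local version (FS)) there is a unique ring homomorphism $\pi_{T,S}:\mathcal{F}_P(Q)\to B$ with $\pi_{T,S}(\theta_{q,p})=T(q)S(p)$; in the unital case $\Delta(1_R)=\mathrm{id}_Q\in\mathcal{F}_P(Q)$, and $(S,T,\sigma,B)$ is called faithful if $\pi_{T,S}(\Delta(1_R))=\sigma(1_R)$. *)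

theory Defs
  imports Main "HOL-Library.Function_Algebras"
begin

inductive_set addgen :: "'a::ab_group_add set \<Rightarrow> 'a set" for X where
  addgen_zero: "0 \<in> addgen X"
| addgen_base: "x \<in> X \<Longrightarrow> x \<in> addgen X"
| addgen_add: "x \<in> addgen X \<Longrightarrow> y \<in> addgen X \<Longrightarrow> x + y \<in> addgen X"
| addgen_neg: "x \<in> addgen X \<Longrightarrow> - x \<in> addgen X"

inductive_set ringgen :: "'a::ring set \<Rightarrow> 'a set" for X where
  ringgen_zero: "0 \<in> ringgen X"
| ringgen_base: "x \<in> X \<Longrightarrow> x \<in> ringgen X"
| ringgen_add: "x \<in> ringgen X \<Longrightarrow> y \<in> ringgen X \<Longrightarrow> x + y \<in> ringgen X"
| ringgen_neg: "x \<in> ringgen X \<Longrightarrow> - x \<in> ringgen X"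
| ringgen_mult: "x \<in> ringgen X \<Longrightarrow> y \<in> ringgen X \<Longrightarrow> x * y \<in> ringgen X"

definition setprod :: "'a::ring set \<Rightarrow> 'a set \<Rightarrow> 'a set" where
  "setprod X Y = addgen {x * y | x y. x \<in> X \<and> y \<in> Y}"

definition additive_subgroup :: "'a::ab_group_add set \<Rightarrow> bool" where
  "additive_subgroup H \<longleftrightarrow> 0 \<in> H \<and> (\<forall>x\<in>H. \<forall>y\<in>H. x + y \<in> H) \<and> (\<forall>x\<in>H. - x \<in> H)"

definition Z_graded :: "(int \<Rightarrow> 'b::ring set) \<Rightarrow> bool" where
  "Z_graded G \<longleftrightarrow>
     (\<forall>i. additive_subgroup (G i)) \<and>
     (\<forall>x. \<exists>f. finite {i. f i \<noteq> 0} \<and> (\<forall>i. f i \<in> G i) \<and> x = (\<Sum>i\<in>{i. f i \<noteq> 0}. f i)) \<and>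
     (\<forall>f. finite {i. f i \<noteq> 0} \<and> (\<forall>i. f i \<in> G i) \<and> (\<Sum>i\<in>{i. f i \<noteq> 0}. f i) = 0
           \<longrightarrow> (\<forall>i. f i = 0)) \<and>
     (\<forall>m n. \<forall>x\<in>G m. \<forall>y\<in>G n. x * y \<in> G (m + n))"

definition strongly_graded :: "(int \<Rightarrow> 'b::ring set) \<Rightarrow> bool" where
  "strongly_graded G \<longleftrightarrow> (\<forall>m n. setprod (G m) (G n) = G (m + n))"

definition bimodule :: "('r::ring_1 \<Rightarrow> 'm::ab_group_add \<Rightarrow> 'm) \<Rightarrow> ('m \<Rightarrow> 'r \<Rightarrow> 'm) \<Rightarrow> bool" where
  "bimodule l r \<longleftrightarrow>
     (\<forall>a x y. l a (x + y) = l a x + l a y) \<and>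
     (\<forall>a b x. l (a + b) x = l a x + l b x) \<and>
     (\<forall>a b x. l (a * b) x = l a (l b x)) \<and>
     (\<forall>a x y. r (x + y) a = r x a + r y a) \<and>
     (\<forall>a b x. r x (a + b) = r x a + r x b) \<and>
     (\<forall>a b x. r x (a * b) = r (r x a) b) \<and>
     (\<forall>a b x. r (l a x) b = l a (r x b))"

definition unital_bimodule :: "('r::ring_1 \<Rightarrow> 'm::ab_group_add \<Rightarrow> 'm) \<Rightarrow> ('m \<Rightarrow> 'r \<Rightarrow> 'm) \<Rightarrow> bool" where
  "unital_bimodule l r \<longleftrightarrow> bimodule l r \<and> (\<forall>x. l 1 x = x) \<and> (\<forall>x. r x 1 = x)"

text \<open>An R-bimodule homomorphism \<open>P \<otimes>\<^sub>R Q \<rightarrow> R\<close> is given, via the universal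
  property of the tensor product, by an R-balanced biadditive map
  \<open>\<psi> :: P \<Rightarrow> Q \<Rightarrow> R\<close> with \<open>\<psi>(rp,q) = r\<psi>(p,q)\<close> and \<open>\<psi>(p,qr) = \<psi>(p,q)r\<close>.\<close>
definition R_system ::
  "('r::ring_1 \<Rightarrow> 'p::ab_group_add \<Rightarrow> 'p) \<Rightarrow> ('p \<Rightarrow> 'r \<Rightarrow> 'p) \<Rightarrow>
   ('r \<Rightarrow> 'q::ab_group_add \<Rightarrow> 'q) \<Rightarrow> ('q \<Rightarrow> 'r \<Rightarrow> 'q) \<Rightarrow> ('p \<Rightarrow> 'q \<Rightarrow> 'r) \<Rightarrow> bool" where
  "R_system lP rP lQ rQ \<psi> \<longleftrightarrow>
     bimodule lP rP \<and> bimodule lQ rQ \<and>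
     (\<forall>p p' q. \<psi> (p + p') q = \<psi> p q + \<psi> p' q) \<and>
     (\<forall>p q q'. \<psi> p (q + q') = \<psi> p q + \<psi> p q') \<and>
     (\<forall>p a q. \<psi> (rP p a) q = \<psi> p (lQ a q)) \<and>
     (\<forall>p a q. \<psi> (lP a p) q = a * \<psi> p q) \<and>
     (\<forall>p a q. \<psi> p (rQ q a) = \<psi> p q * a)"

definition unital_R_system ::
  "('r::ring_1 \<Rightarrow> 'p::ab_group_add \<Rightarrow> 'p) \<Rightarrow> ('p \<Rightarrow> 'r \<Rightarrow> 'p) \<Rightarrow>
   ('r \<Rightarrow> 'q::ab_group_add \<Rightarrow> 'q) \<Rightarrow> ('q \<Rightarrow> 'r \<Rightarrow> 'q) \<Rightarrow> ('p \<Rightarrow> 'q \<Rightarrow> 'r) \<Rightarrow> bool" where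
  "unital_R_system lP rP lQ rQ \<psi> \<longleftrightarrow>
     R_system lP rP lQ rQ \<psi> \<and> unital_bimodule lP rP \<and> unital_bimodule lQ rQ"

text \<open>Surjectivity of \<open>\<psi> : P \<otimes>\<^sub>R Q \<rightarrow> R\<close>: its image is the additive subgroup
  generated by the values on simple tensors.\<close>
definition psi_surjective :: "('p \<Rightarrow> 'q \<Rightarrow> 'r::ab_group_add) \<Rightarrow> bool" where
  "psi_surjective \<psi> \<longleftrightarrow> addgen {\<psi> p q | p q. True} = UNIV"

definition thetaQ :: "('q \<Rightarrow> 'r \<Rightarrow> 'q) \<Rightarrow> ('p \<Rightarrow> 'q \<Rightarrow> 'r) \<Rightarrow> 'q \<Rightarrow> 'p \<Rightarrow> 'q \<Rightarrow> 'q" where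
  "thetaQ rQ \<psi> q p = (\<lambda>x. rQ q (\<psi> p x))"

definition thetaP :: "('r \<Rightarrow> 'p \<Rightarrow> 'p) \<Rightarrow> ('p \<Rightarrow> 'q \<Rightarrow> 'r) \<Rightarrow> 'p \<Rightarrow> 'q \<Rightarrow> 'p \<Rightarrow> 'p" where
  "thetaP lP \<psi> p q = (\<lambda>y. lP (\<psi> y q) p)"

definition F_PQ :: "('q::ab_group_add \<Rightarrow> 'r \<Rightarrow> 'q) \<Rightarrow> ('p \<Rightarrow> 'q \<Rightarrow> 'r) \<Rightarrow> ('q \<Rightarrow> 'q) set" where
  "F_PQ rQ \<psi> = addgen {thetaQ rQ \<psi> q p | q p. True}"

definition F_QP :: "('r \<Rightarrow> 'p::ab_group_add \<Rightarrow> 'p) \<Rightarrow> ('p \<Rightarrow> 'q \<Rightarrow> 'r) \<Rightarrow> ('p \<Rightarrow> 'p) set" where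
  "F_QP lP \<psi> = addgen {thetaP lP \<psi> p q | p q. True}"

definition condition_FS' ::
  "('r \<Rightarrow> 'p::ab_group_add \<Rightarrow> 'p) \<Rightarrow> ('q::ab_group_add \<Rightarrow> 'r \<Rightarrow> 'q) \<Rightarrow> ('p \<Rightarrow> 'q \<Rightarrow> 'r) \<Rightarrow> bool" where
  "condition_FS' lP rQ \<psi> \<longleftrightarrow>
     (\<exists>\<Theta>\<in>F_PQ rQ \<psi>. \<forall>q. \<Theta> q = q) \<and> (\<exists>\<Phi>\<in>F_QP lP \<psi>. \<forall>p. \<Phi> p = p)"

definition covariant_rep ::
  "('r::ring_1 \<Rightarrow> 'p::ab_group_add \<Rightarrow> 'p) \<Rightarrow> ('p \<Rightarrow> 'r \<Rightarrow> 'p) \<Rightarrow>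
   ('r \<Rightarrow> 'q::ab_group_add \<Rightarrow> 'q) \<Rightarrow> ('q \<Rightarrow> 'r \<Rightarrow> 'q) \<Rightarrow> ('p \<Rightarrow> 'q \<Rightarrow> 'r) \<Rightarrow>
   ('p \<Rightarrow> 'b::ring) \<Rightarrow> ('q \<Rightarrow> 'b) \<Rightarrow> ('r \<Rightarrow> 'b) \<Rightarrow> bool" where
  "covariant_rep lP rP lQ rQ \<psi> S T \<sigma> \<longleftrightarrow>
     (\<forall>x y. S (x + y) = S x + S y) \<and>
     (\<forall>x y. T (x + y) = T x + T y) \<and>
     (\<forall>a b. \<sigma> (a + b) = \<sigma> a + \<sigma> b) \<and>
     (\<forall>a b. \<sigma> (a * b) = \<sigma> a * \<sigma> b) \<and>
     (\<forall>p a. S (rP p a) = S p * \<sigma> a) \<and>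
     (\<forall>p a. S (lP a p) = \<sigma> a * S p) \<and>
     (\<forall>q a. T (rQ q a) = T q * \<sigma> a) \<and>
     (\<forall>q a. T (lQ a q) = \<sigma> a * T q) \<and>
     (\<forall>p q. \<sigma> (\<psi> p q) = S p * T q)"

definition rep_injective :: "('r \<Rightarrow> 'b) \<Rightarrow> bool" where
  "rep_injective \<sigma> \<longleftrightarrow> inj \<sigma>"

definition rep_surjective :: "('p \<Rightarrow> 'b::ring) \<Rightarrow> ('q \<Rightarrow> 'b) \<Rightarrow> ('r \<Rightarrow> 'b) \<Rightarrow> bool" where
  "rep_surjective S T \<sigma> \<longleftrightarrow> ringgen (range \<sigma> \<union> range S \<union> range T) = UNIV"

definition rep_graded ::
  "('p \<Rightarrow> 'b::ring) \<Rightarrow> ('q \<Rightarrow> 'b) \<Rightarrow> ('r \<Rightarrow> 'b) \<Rightarrow> (int \<Rightarrow> 'b set) \<Rightarrow> bool" where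
  "rep_graded S T \<sigma> G \<longleftrightarrow>
     rep_surjective S T \<sigma> \<and> Z_graded G \<and>
     range \<sigma> \<subseteq> G 0 \<and> range T \<subseteq> G 1 \<and> range S \<subseteq> G (-1)"

text \<open>Faithfulness: \<open>\<pi>\<^sub>T\<^sub>,\<^sub>S(\<Delta>(1)) = \<sigma>(1)\<close>, where \<open>\<Delta>(1) = id\<close> and \<open>\<pi>\<^sub>T\<^sub>,\<^sub>S\<close> is the
  (unique) ring homomorphism \<open>F_P(Q) \<rightarrow> B\<close> (ring structure: pointwise addition,
  composition) with \<open>\<pi>(\<theta>\<^sub>q\<^sub>,\<^sub>p) = T(q)S(p)\<close>.\<close>
definition rep_faithful ::
  "('r::ring_1 \<Rightarrow> 'q::ab_group_add \<Rightarrow> 'q) \<Rightarrow> ('q \<Rightarrow> 'r \<Rightarrow> 'q) \<Rightarrow> ('p \<Rightarrow> 'q \<Rightarrow> 'r) \<Rightarrow>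
   ('p \<Rightarrow> 'b::ring) \<Rightarrow> ('q \<Rightarrow> 'b) \<Rightarrow> ('r \<Rightarrow> 'b) \<Rightarrow> bool" where
  "rep_faithful lQ rQ \<psi> S T \<sigma> \<longleftrightarrow>
     (\<exists>\<pi> :: ('q \<Rightarrow> 'q) \<Rightarrow> 'b.
        (\<forall>f\<in>F_PQ rQ \<psi>. \<forall>g\<in>F_PQ rQ \<psi>. \<pi> (f + g) = \<pi> f + \<pi> g) \<and>
        (\<forall>f\<in>F_PQ rQ \<psi>. \<forall>g\<in>F_PQ rQ \<psi>. \<pi> (f \<circ> g) = \<pi> f * \<pi> g) \<and>
        (\<forall>q p. \<pi> (thetaQ rQ \<psi> q p) = T q * S p) \<and>
        \<pi> (lQ 1) = \<sigma> 1)"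

end

theory Submission
  imports Defs
begin

lemma addgen_sub:
  assumes "X \<subseteq> H" "additive_subgroup H" shows "addgen X \<subseteq> H"
proof
  fix x assume "x \<in> addgen X" then show "x \<in> H"
    by induction (use assms in \<open>auto simp: additive_subgroup_def\<close>)
qed

lemma addgen_mono: "X \<subseteq> Y \<Longrightarrow> addgen X \<subseteq> addgen Y"
  by (rule addgen_sub) (auto simp: additive_subgroup_def intro: addgen.intros)

lemma mult_left_setprod:
  fixes a b :: "'b::ring"
  assumes "a \<in> setprod X Y" "\<forall>x\<in>X. b*x \<in> W" shows "b*a \<in> setprod W Y"
  using assms(1) unfolding setprod_def
proof induction
  case addgen_zero then show ?case by (simp add: addgen.addgen_zero)
next
  case (addgen_base x)
  then obtain u v where "x = u*v" "u \<in> X" "v \<in> Y" by blast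
  then have "b*x = (b*u)*v" by (simp add: mult.assoc)
  then show ?case using \<open>u \<in> X\<close> \<open>v \<in> Y\<close> assms(2) by (auto intro!: addgen.addgen_base)
next
  case (addgen_add x y) then show ?case by (simp add: distrib_left addgen.addgen_add)
next
  case (addgen_neg x) then show ?case by (simp add: addgen.addgen_neg)
qed

lemma step:
  fixes G :: "int \<Rightarrow> 'b::ring set"
  assumes gr: "\<forall>m n. \<forall>x\<in>G m. \<forall>y\<in>G n. x*y \<in> G(m+n)"
    and e: "e \<in> setprod (G d) (G (-d))" and eid: "\<forall>z. e*z = z"
    and IH: "\<forall>n. G(m+n) \<subseteq> setprod (G m) (G n)"
  shows "G(d+m+n) \<subseteq> setprod (G(d+m)) (G n)"
proof
  fix z assume z: "z \<in> G(d+m+n)"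
  have "a*z \<in> setprod (G(d+m)) (G n)" if "a \<in> setprod (G d) (G (-d))" for a
    using that unfolding setprod_def
  proof induction
    case addgen_zero then show ?case by (simp add: addgen.addgen_zero)
  next
    case (addgen_base x)
    then obtain u v where uv: "x = u*v" "u \<in> G d" "v \<in> G (-d)" by blast
    have "v*z \<in> G(-d + (d+m+n))" using gr uv z by blast
    then have "v*z \<in> G(m+n)" by (simp add: algebra_simps)
    then have "v*z \<in> setprod (G m) (G n)" using IH by blast
    moreover have "\<forall>x\<in>G m. u*x \<in> G(d+m)" using gr uv by blast
    ultimately have "u*(v*z) \<in> setprod (G(d+m)) (G n)" by (rule mult_left_setprod)
    then show ?case using uv by (simp add: mult.assoc setprod_def)
  next
    case (addgen_add x y) then show ?case by (simp add: distrib_right addgen.addgen_add)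
  next
    case (addgen_neg x) then show ?case by (simp add: addgen.addgen_neg)
  qed
  from this[OF e] eid show "z \<in> setprod (G(d+m)) (G n)" by simp
qed

theorem mainTheorem4:
  fixes lP :: "'r::ring_1 \<Rightarrow> 'p::ab_group_add \<Rightarrow> 'p" and rP :: "'p \<Rightarrow> 'r \<Rightarrow> 'p"
    and lQ :: "'r \<Rightarrow> 'q::ab_group_add \<Rightarrow> 'q" and rQ :: "'q \<Rightarrow> 'r \<Rightarrow> 'q"
    and \<psi> :: "'p \<Rightarrow> 'q \<Rightarrow> 'r"
    and S :: "'p \<Rightarrow> 'b::ring" and T :: "'q \<Rightarrow> 'b" and \<sigma> :: "'r \<Rightarrow> 'b"
    and G :: "int \<Rightarrow> 'b set"
  assumes "unital_R_system lP rP lQ rQ \<psi>"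
    and "condition_FS' lP rQ \<psi>"
    and "covariant_rep lP rP lQ rQ \<psi> S T \<sigma>"
    and "rep_injective \<sigma>"
    and "rep_surjective S T \<sigma>"
    and "rep_graded S T \<sigma> G"
    and "rep_faithful lQ rQ \<psi> S T \<sigma>"
    and "psi_surjective \<psi>"
  shows "strongly_graded G"
proof -
  have uP: "\<forall>x. lP 1 x = x" and uQ: "\<forall>x. lQ 1 x = x"
    using assms(1) by (auto simp: unital_R_system_def unital_bimodule_def)
  have cov: "\<forall>a b. \<sigma> (a + b) = \<sigma> a + \<sigma> b" "\<forall>a b. \<sigma> (a * b) = \<sigma> a * \<sigma> b"
    "\<forall>p a. S (lP a p) = \<sigma> a * S p" "\<forall>q a. T (lQ a q) = \<sigma> a * T q"
    "\<forall>p q. \<sigma> (\<psi> p q) = S p * T q"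
    using assms(3) unfolding covariant_rep_def by blast+
  have ZG: "Z_graded G" and rs: "range \<sigma> \<subseteq> G 0" "range T \<subseteq> G 1" "range S \<subseteq> G (-1)"
    using assms(6) unfolding rep_graded_def by auto
  have gr: "\<forall>m n. \<forall>x\<in>G m. \<forall>y\<in>G n. x*y \<in> G(m+n)" and sg: "\<forall>i. additive_subgroup (G i)"
    using ZG unfolding Z_graded_def by blast+
  define e where "e = \<sigma> 1"
  have eid: "\<forall>z. e*z = z"
  proof
    fix z :: 'b
    have "z \<in> ringgen (range \<sigma> \<union> range S \<union> range T)"
      using assms(5) unfolding rep_surjective_def by simp
    then show "e*z = z"
    proof induction
      case (ringgen_base x)
      then show ?case
      proof (elim UnE imageE)
        fix r assume "x = \<sigma> r" then show ?thesis using cov(2) e_def by (metis mult_1_left)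
      next
        fix p assume "x = S p" then show ?thesis using cov(3) uP e_def by metis
      next
        fix q assume "x = T q" then show ?thesis using cov(4) uQ e_def by metis
      qed
    qed (auto simp: distrib_left mult.assoc[symmetric])
  qed
  have s0: "\<sigma> 0 = 0" using cov(1) by (metis add_cancel_right_right)
  have sneg: "\<sigma> (-x) = - \<sigma> x" for x using cov(1) s0
    by (metis add.right_inverse add_eq_0_iff2)
  have e2: "e \<in> setprod (G (-1)) (G 1)"
  proof -
    have "(1::'r) \<in> addgen {\<psi> p q | p q. True}" using assms(8) unfolding psi_surjective_def by simp
    moreover have "\<sigma> x \<in> setprod (G (-1)) (G 1)" if "x \<in> addgen {\<psi> p q | p q. True}" for x
      using that unfolding setprod_def
    proof induction
      case addgen_zero then show ?case using s0 by (simp add: addgen.addgen_zero)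
    next
      case (addgen_base x)
      then obtain p q where "x = \<psi> p q" by blast
      then have "\<sigma> x = S p * T q" using cov(5) by simp
      moreover have "S p \<in> G (-1)" "T q \<in> G 1" using rs by auto
      ultimately show ?case by (auto intro!: addgen.addgen_base)
    next
      case (addgen_add x y) then show ?case using cov(1) by (simp add: addgen.addgen_add)
    next
      case (addgen_neg x) then show ?case using sneg by (simp add: addgen.addgen_neg)
    qed
    ultimately show ?thesis unfolding e_def by blast
  qed
  have e1: "e \<in> setprod (G 1) (G (-1))"
  proof -
    obtain \<pi> :: "('q \<Rightarrow> 'q) \<Rightarrow> 'b" where
      padd: "\<forall>f\<in>F_PQ rQ \<psi>. \<forall>g\<in>F_PQ rQ \<psi>. \<pi> (f + g) = \<pi> f + \<pi> g" and
      pth: "\<forall>q p. \<pi> (thetaQ rQ \<psi> q p) = T q * S p" and p1: "\<pi> (lQ 1) = \<sigma> 1"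
      using assms(7) unfolding rep_faithful_def by blast
    obtain \<Theta> where Th: "\<Theta> \<in> F_PQ rQ \<psi>" "\<forall>q. \<Theta> q = q"
      using assms(2) unfolding condition_FS'_def by blast
    have "lQ 1 = \<Theta>" using uQ Th(2) by auto
    with Th(1) have l1: "lQ 1 \<in> F_PQ rQ \<psi>" by simp
    have z0: "(0::'q\<Rightarrow>'q) \<in> F_PQ rQ \<psi>" unfolding F_PQ_def by (rule addgen.addgen_zero)
    have pz: "\<pi> 0 = 0" using padd z0 by (metis add_0 add_cancel_right_right)
    have "\<pi> f \<in> setprod (G 1) (G (-1)) \<and> f \<in> F_PQ rQ \<psi>" if "f \<in> F_PQ rQ \<psi>" for f
      using that unfolding F_PQ_def
    proof induction
      case addgen_zero then show ?case by (simp only: pz setprod_def) (blast intro: addgen.addgen_zero)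
    next
      case (addgen_base x)
      then obtain q p where "x = thetaQ rQ \<psi> q p" by blast
      moreover have "S p \<in> G (-1)" "T q \<in> G 1" using rs by auto
      ultimately show ?case using pth addgen_base
        by (auto simp: setprod_def F_PQ_def intro!: addgen.intros)
    next
      case (addgen_add x y)
      have xF: "x \<in> F_PQ rQ \<psi>" "y \<in> F_PQ rQ \<psi>" using addgen_add(1,2) unfolding F_PQ_def .
      then have eq: "\<pi> (x + y) = \<pi> x + \<pi> y" using padd by blast
      have "\<pi> x \<in> setprod (G 1) (G (-1))" "\<pi> y \<in> setprod (G 1) (G (-1))" using addgen_add(3,4) by blast+
      then have "\<pi> x + \<pi> y \<in> setprod (G 1) (G (-1))" unfolding setprod_def by (rule addgen.addgen_add)
      moreover have "x + y \<in> F_PQ rQ \<psi>" using xF unfolding F_PQ_def by (rule addgen.addgen_add)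
      ultimately show ?case unfolding eq F_PQ_def by blast
    next
      case (addgen_neg x)
      have xin: "x \<in> F_PQ rQ \<psi>" using addgen_neg(1) unfolding F_PQ_def .
      have nxin: "- x \<in> F_PQ rQ \<psi>" using xin unfolding F_PQ_def by (rule addgen.addgen_neg)
      have "\<pi> (x + - x) = \<pi> x + \<pi> (-x)" using padd xin nxin by blast
      then have "\<pi> x + \<pi> (-x) = 0" using pz by simp
      then have eq: "\<pi> (-x) = - \<pi> x" by (metis add.commute add_eq_0_iff2)
      have "\<pi> x \<in> setprod (G 1) (G (-1))" using addgen_neg(2) by blast
      then have "- \<pi> x \<in> setprod (G 1) (G (-1))" unfolding setprod_def by (rule addgen.addgen_neg)
      then show ?case using nxin unfolding eq F_PQ_def by blast
    qed
    from this[OF l1] p1 show ?thesis unfolding e_def by simp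
  qed
  have main: "\<forall>n. G(m+n) \<subseteq> setprod (G m) (G n)" for m
  proof (induction m rule: int_induct[where k=0])
    case base
    show ?case
    proof (intro allI subsetI)
      fix n z assume "z \<in> G (0+n)"
      moreover have "e \<in> G 0" using rs e_def by auto
      ultimately have "e*z \<in> setprod (G 0) (G n)" by (auto simp: setprod_def intro!: addgen.intros)
      then show "z \<in> setprod (G 0) (G n)" using eid by simp
    qed
  next
    case (step1 i)
    show ?case
    proof
      fix n
      have "G(1+i+n) \<subseteq> setprod (G(1+i)) (G n)" using step[OF gr _ eid step1(2)] e1 by simp
      then show "G(i+1+n) \<subseteq> setprod (G(i+1)) (G n)" by (simp add: add.commute)
    qed
  next
    case (step2 i)
    show ?case
    proof
      fix n
      have "G(-1+i+n) \<subseteq> setprod (G(-1+i)) (G n)" using step[where d="-1" and n=n, OF gr _ eid step2(2)] e2 by simp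
      moreover have "-1+i = i-1" by simp
      ultimately show "G(i-1+n) \<subseteq> setprod (G(i-1)) (G n)" by metis
    qed
  qed
  show ?thesis unfolding strongly_graded_def
  proof (intro allI equalityI)
    fix m n
    show "setprod (G m) (G n) \<subseteq> G (m+n)" unfolding setprod_def
      by (rule addgen_sub) (use gr sg in blast)+
    show "G (m+n) \<subseteq> setprod (G m) (G n)" using main by blast
  qed
qed

end
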